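(* For every $n\ge1$, $N=2^n$ and $i\in[1..2N]$, let $R_{N,i}$ be the $i$-th row of $\mathsf{ShiftBin}_N$ (a string of length $N(n+2)$). Then every 1D SLP deriving a string that contains $R_{N,i}$ as a substring has size at least $\min\{i,\,2N-i+1\}$.
   Context: Alphabet $\Sigma\supseteq\{0,1,\$\}$. For $N=2^n$, $\mathsf{Bin}_N$ is the $N\times(n+2)$ 2D string (array) whose $i$-th row ($i\in[1..N]$) is $\$\,b_{i-1}\,\$$, where $b_{i-1}$ is the $n$-bit binary representation of $i-1$. $\mathsf{ShiftBin}_N$ is the $2N\times N(n+2)$ array such that for each $j\in[1..N]$, the subarray formed by rows $j,\dots,j+N-1$ and columns $(j-1)(n+2)+1,\dots,j(n+2)$ equals $\mathsf{Bin}_N$, and all other entries are $0$. A 1D SLP is a triple $(\mathcal V,\mathcal S,\rho)$ with a finite set $\mathcal V$ of nonterminals, a start $\mathcal S\in\mathcal V$, and productions $\rho(X)$ each either a character of $\Sigma$ or a concatenation $YZ$ of two nonterminals, with acyclic occurrence relation; it derives the string obtained by recursively expanding $\mathcal S$. Its size is the total number of symbols (nonterminals and characters) on all right-hand sides. *)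

theory Defs
  imports Main "HOL-Library.Sublist"
begin

datatype ('a, 'v) rhs = Term 'a | Cat 'v 'v

definition occ_rel :: "'v set \<Rightarrow> ('v \<Rightarrow> ('a, 'v) rhs) \<Rightarrow> ('v \<times> 'v) set" where
  "occ_rel V \<rho> = {(X, Y). X \<in> V \<and> (\<exists>Z. \<rho> X = Cat Y Z \<or> \<rho> X = Cat Z Y)}"

definition is_slp :: "'v set \<Rightarrow> 'v \<Rightarrow> ('v \<Rightarrow> ('a, 'v) rhs) \<Rightarrow> bool" where
  "is_slp V S \<rho> \<longleftrightarrow> finite V \<and> S \<in> V \<and>
     (\<forall>X\<in>V. \<forall>Y Z. \<rho> X = Cat Y Z \<longrightarrow> Y \<in> V \<and> Z \<in> V) \<and>
     acyclic (occ_rel V \<rho>)"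

inductive derives :: "('v \<Rightarrow> ('a, 'v) rhs) \<Rightarrow> 'v \<Rightarrow> 'a list \<Rightarrow> bool" for \<rho> where
  derives_term: "\<rho> X = Term c \<Longrightarrow> derives \<rho> X [c]"
| derives_cat: "\<rho> X = Cat Y Z \<Longrightarrow> derives \<rho> Y u \<Longrightarrow> derives \<rho> Z v \<Longrightarrow> derives \<rho> X (u @ v)"

definition slp_size :: "'v set \<Rightarrow> ('v \<Rightarrow> ('a, 'v) rhs) \<Rightarrow> nat" where
  "slp_size V \<rho> = (\<Sum>X\<in>V. case \<rho> X of Term _ \<Rightarrow> 1 | Cat _ _ \<Rightarrow> 2)"

text \<open>Row r (1-indexed, r in [1..2N]) of ShiftBin_N with N = 2^n, as a list of length N(n+2),
  over characters c0 ('0'), c1 ('1'), cd ('$').  Column c' (0-indexed) lies in block j = c' div (n+2) + 1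
  at offset k = c' mod (n+2) + 1.  The block is Bin_N placed at rows j..j+N-1; its row r-j+1
  is $ b_{r-j} $, with b the n-bit binary representation, most significant bit first.\<close>
definition shiftbin_row :: "'a \<Rightarrow> 'a \<Rightarrow> 'a \<Rightarrow> nat \<Rightarrow> nat \<Rightarrow> 'a list" where
  "shiftbin_row c0 c1 cd n r =
     map (\<lambda>c'. let j' = c' div (n + 2); k' = c' mod (n + 2) in
                 if j' < r \<and> r \<le> j' + 2 ^ n then
                   (if k' = 0 \<or> k' = n + 1 then cd
                    else if (r - j' - 1) div 2 ^ (n - k') mod 2 = 1 then c1 else c0)
                 else c0)
         [0..<2 ^ n * (n + 2)]"

end

theory Submission
  imports Defs
begin
lemma derives_fun: "derives \<rho> X u \<Longrightarrow> derives \<rho> X v \<Longrightarrow> u = v"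
proof (induction arbitrary: v rule: derives.induct)
  case (derives_term X c)
  from derives_term.prems show ?case
  proof (cases rule: derives.cases)
    case (derives_term c')
    then show ?thesis using derives_term.hyps by simp
  next
    case (derives_cat Y Z u' v')
    then show ?thesis using derives_term.hyps by simp
  qed
next
  case (derives_cat X Y Z u1 u2)
  from derives_cat.prems show ?case
  proof (cases rule: derives.cases)
    case (derives_term c')
    then show ?thesis using derives_cat.hyps by simp
  next
    case (derives_cat Y' Z' u' v')
    then have "Y' = Y" "Z' = Z" using derives_cat.hyps by simp_all
    then show ?thesis using derives_cat derives_cat.IH by simp
  qed
qed
lemma cover:
  assumes "derives \<rho> X u" "X \<in> V" "\<forall>X\<in>V. \<forall>Y Z. \<rho> X = Cat Y Z \<longrightarrow> Y \<in> V \<and> Z \<in> V"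
  shows "a + l \<le> length u \<Longrightarrow> 2 \<le> l \<Longrightarrow> \<exists>Y Y1 Y2 u1 u2 q. Y \<in> V \<and> \<rho> Y = Cat Y1 Y2 \<and>
     derives \<rho> Y1 u1 \<and> derives \<rho> Y2 u2 \<and> q \<le> a \<and> a < q + length u1 \<and> q + length u1 < a + l \<and>
     a + l \<le> q + length (u1 @ u2) \<and> q + length (u1 @ u2) \<le> length u \<and>
     (\<forall>t < length (u1 @ u2). u ! (q + t) = (u1 @ u2) ! t)"
  using assms(1,2)
proof (induction arbitrary: a rule: derives.induct)
  case (derives_term X c)
  have False using derives_term.prems by simp
  then show ?case by blast
next
  case (derives_cat X Y Z u v)
  have YV: "Y \<in> V" and ZV: "Z \<in> V" using assms(3) derives_cat.prems(3) derives_cat.hyps(1) by blast+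
  consider "a + l \<le> length u" | "length u \<le> a" | "a < length u" "length u < a + l" by linarith
  then show ?case
  proof cases
    case 1
    from derives_cat.IH(1)[OF 1 derives_cat.prems(2) YV] obtain Y' Y1 Y2 u1 u2 q where
      h: "Y' \<in> V \<and> \<rho> Y' = Cat Y1 Y2 \<and>
     derives \<rho> Y1 u1 \<and> derives \<rho> Y2 u2 \<and> q \<le> a \<and> a < q + length u1 \<and> q + length u1 < a + l \<and>
     a + l \<le> q + length (u1 @ u2) \<and> q + length (u1 @ u2) \<le> length u \<and>
     (\<forall>t < length (u1 @ u2). u ! (q + t) = (u1 @ u2) ! t)" by blast
    have "\<forall>t < length (u1 @ u2). (u @ v) ! (q + t) = (u1 @ u2) ! t"
    proof (intro allI impI)
      fix t assume t: "t < length (u1 @ u2)"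
      then have "q + t < length u" using h by linarith
      then have "(u @ v) ! (q + t) = u ! (q + t)" by (simp add: nth_append)
      also have "\<dots> = (u1 @ u2) ! t" using h t by blast
      finally show "(u @ v) ! (q + t) = (u1 @ u2) ! t" .
    qed
    moreover have "q + length (u1 @ u2) \<le> length (u @ v)" using h by simp
    ultimately show ?thesis using h by blast
  next
    case 2
    have a2: "(a - length u) + l \<le> length v" using derives_cat.prems 2 by simp
    from derives_cat.IH(2)[OF a2 derives_cat.prems(2) ZV] obtain Y' Y1 Y2 u1 u2 q where
      h: "Y' \<in> V \<and> \<rho> Y' = Cat Y1 Y2 \<and>
     derives \<rho> Y1 u1 \<and> derives \<rho> Y2 u2 \<and> q \<le> a - length u \<and> a - length u < q + length u1 \<and> q + length u1 < a - length u + l \<and>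
     a - length u + l \<le> q + length (u1 @ u2) \<and> q + length (u1 @ u2) \<le> length v \<and>
     (\<forall>t < length (u1 @ u2). v ! (q + t) = (u1 @ u2) ! t)" by blast
    have "\<forall>t < length (u1 @ u2). (u @ v) ! (length u + q + t) = (u1 @ u2) ! t"
    proof (intro allI impI)
      fix t assume t: "t < length (u1 @ u2)"
      have "(u @ v) ! (length u + q + t) = v ! (q + t)"
        by (metis add.assoc nth_append_length_plus)
      also have "\<dots> = (u1 @ u2) ! t" using h t by blast
      finally show "(u @ v) ! (length u + q + t) = (u1 @ u2) ! t" .
    qed
    moreover have "length u + q \<le> a" "a < length u + q + length u1" "length u + q + length u1 < a + l"
      "a + l \<le> length u + q + length (u1 @ u2)" "length u + q + length (u1 @ u2) \<le> length (u @ v)"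
      using h 2 by auto
    ultimately show ?thesis using h by blast
  next
    case 3
    have "\<forall>t < length (u @ v). (u @ v) ! (0 + t) = (u @ v) ! t" by simp
    moreover have "(0::nat) \<le> a" "a < 0 + length u" "0 + length u < a + l"
      "a + l \<le> 0 + length (u @ v)" "0 + length (u @ v) \<le> length (u @ v)"
      using 3 derives_cat.prems by auto
    ultimately show ?thesis using derives_cat.hyps derives_cat.prems(3) by blast
  qed
qed

lemma bits_eq:
  fixes x y n :: nat
  assumes "x < 2^n" "y < 2^n"
    "\<forall>t. 1 \<le> t \<and> t \<le> n \<longrightarrow> ((x div 2^(n-t) mod 2 = 1) = (y div 2^(n-t) mod 2 = 1))"
  shows "x = y"
proof -
  have "bit x k = bit y k" for k
  proof (cases "k < n")
    case True
    then have "1 \<le> n - k \<and> n - k \<le> n" "n - (n - k) = k" by auto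
    with assms(3)[rule_format, of "n-k"] show ?thesis
      by (simp add: bit_iff_odd odd_iff_mod_2_eq_one)
  next
    case False
    then have "(2::nat)^n \<le> 2^k" by simp
    then have "x < 2^k" "y < 2^k" using assms(1,2) by linarith+
    then have "x div 2^k = 0" "y div 2^k = 0" by simp_all
    then show ?thesis by (simp add: bit_iff_odd)
  qed
  then show ?thesis by (simp add: bit_eq_iff)
qed

lemma R_nth: "z < 2^n*(n+2) \<Longrightarrow> shiftbin_row c0 c1 cd n i ! z =
  (if z div (n+2) < i \<and> i \<le> z div (n+2) + 2^n then
     (if z mod (n+2) = 0 \<or> z mod (n+2) = n+1 then cd
      else if (i - z div (n+2) - 1) div 2^(n - z mod (n+2)) mod 2 = 1 then c1 else c0) else c0)"
  by (simp add: shiftbin_row_def Let_def)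

lemma R_len: "length (shiftbin_row c0 c1 cd n i) = 2^n*(n+2)"
  by (simp add: shiftbin_row_def)

lemma divmod_blk: "(t::nat) < n+2 \<Longrightarrow> (j*(n+2)+t) div (n+2) = j \<and> (j*(n+2)+t) mod (n+2) = t"
proof -
  assume a: "t < n+2"
  have e: "j*(n+2)+t = t + (n+2)*j" by simp
  have "(t + (n+2)*j) div (n+2) = t div (n+2) + j" using div_mult_self2[of "n+2" t j] by simp
  moreover have "(t + (n+2)*j) mod (n+2) = t mod (n+2)" by (rule mod_mult_self2)
  ultimately show ?thesis using a by (simp add: e ac_simps)
qed


lemma R_uniq:
  fixes c0 c1 cd :: 'a
  assumes d: "c0 \<noteq> c1" "c0 \<noteq> cd" "c1 \<noteq> cd" and n1: "n \<ge> 1"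
    and act: "j < 2^n" "j < i" "i \<le> j + 2^n"
    and cb: "c + (n+2) \<le> 2^n*(n+2)"
    and eq: "\<forall>t<n+2. shiftbin_row c0 c1 cd n i ! (c+t) = shiftbin_row c0 c1 cd n i ! (j*(n+2)+t)"
  shows "c = j*(n+2)"
proof -
  let ?R = "shiftbin_row c0 c1 cd n i"
  have "Suc j * (n+2) \<le> 2^n*(n+2)" using act(1) by (intro mult_right_mono) simp_all
  then have jL: "j*(n+2) + t < 2^n*(n+2)" if "t < n+2" for t using that by simp
  have blk: "?R!(j*(n+2)+t) = (if t = 0 \<or> t = n+1 then cd else if (i-j-1) div 2^(n-t) mod 2 = 1 then c1 else c0)"
    if "t < n+2" for t
    using R_nth[OF jL[OF that], of c0 c1 cd i] divmod_blk[OF that, of j] act by simp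
  have clt: "c + t < 2^n*(n+2)" if "t < n+2" for t using cb that by linarith
  have Rc: "?R!c = cd" using eq[rule_format, of 0] blk[of 0] by simp
  have Rc2: "?R!(c+(n+1)) = cd" using eq[rule_format, of "n+1"] blk[of "n+1"] by simp
  define m where "m = c div (n+2)"
  define r where "r = c mod (n+2)"
  have ceq: "c = m*(n+2) + r" unfolding m_def r_def by (metis div_mult_mod_eq)
  have rlt: "r < n+2" unfolding r_def by simp
  have "?R!c = (if m < i \<and> i \<le> m + 2^n then
     (if r = 0 \<or> r = n+1 then cd
      else if (i - m - 1) div 2^(n - r) mod 2 = 1 then c1 else c0) else c0)"
    using R_nth[OF clt[of 0], of c0 c1 cd i] unfolding m_def r_def by simp
  with Rc d have mact: "m < i" "i \<le> m + 2^n" and r01: "r = 0 \<or> r = n+1"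
    by (auto split: if_splits)
  have "r \<noteq> n+1"
  proof
    assume rn: "r = n+1"
    have e2: "c + (n+1) = (m+1)*(n+2) + n" using ceq rn by (simp add: algebra_simps)
    have nl: "n < n+2" by simp
    have "(c + (n+1)) div (n+2) = m+1 \<and> (c+(n+1)) mod (n+2) = n"
      unfolding e2 using divmod_blk[OF nl, of "m+1"] by blast
    with R_nth[OF clt[of "n+1"], of c0 c1 cd i] Rc2 d n1 show False
      by (auto split: if_splits)
  qed
  with r01 have r0: "r = 0" by simp
  have bitsame: "((i-m-1) div 2^(n-t) mod 2 = 1) = ((i-j-1) div 2^(n-t) mod 2 = 1)"
    if t: "1 \<le> t \<and> t \<le> n" for t
  proof -
    have tl: "t < n+2" using t by simp
    have "?R!(c+t) = (if (i-m-1) div 2^(n-t) mod 2 = 1 then c1 else c0)"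
      using R_nth[OF clt[OF tl], of c0 c1 cd i] divmod_blk[OF tl, of m] ceq r0 mact t by simp
    moreover have "?R!(j*(n+2)+t) = (if (i-j-1) div 2^(n-t) mod 2 = 1 then c1 else c0)"
      using blk[OF tl] t by simp
    ultimately show ?thesis using eq[rule_format, OF tl] d by (auto split: if_splits)
  qed
  have "i - m - 1 = i - j - 1"
    by (rule bits_eq[of _ n]) (use mact act bitsame in auto)
  then have "m = j" using mact act by simp
  then show ?thesis using ceq r0 by simp
qed

lemma pair:
  fixes w R e :: "'a list"
  assumes w: "w = x @ R @ y" and p: "p = length x"
  and uniq: "\<forall>c. c + L \<le> length R \<longrightarrow> (\<forall>t<L. R!(c+t) = R!(b+t)) \<longrightarrow> c = b"
  and bL: "b + L \<le> length R"
  and aj: "p + L \<le> aj" "aj + L \<le> p + b"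
  and qj: "qj \<le> aj" "aj < qj + m" "qj + m < aj + L" "aj + L \<le> qj + length e"
     "\<forall>t<length e. w!(qj+t) = e!t"
  and qk: "qk \<le> p+b" "p+b < qk + m" "qk + m < p+b+L" "p+b+L \<le> qk + length e"
     "\<forall>t<length e. w!(qk+t) = e!t"
  shows False
proof -
  define c where "c = qj + (p+b-qk) - p"
  have cp: "p + c = qj + (p+b-qk)" unfolding c_def using aj qj qk by linarith
  have cL: "c + L \<le> length R" unfolding c_def using aj qj qk bL by linarith
  have wR: "w!(p+z) = R!z" if "z < length R" for z
    using that unfolding w p by (simp add: nth_append)
  have "R!(c+t) = R!(b+t)" if t: "t<L" for t
  proof -
    have i1: "p+(c+t) = qj + (p+b-qk+t)" using cp by linarith
    have i2: "qk + (p+b-qk+t) = p+(b+t)" using qk by linarith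
    have i3: "p+b-qk+t < length e" using qk t by linarith
    have "R!(c+t) = w!(p+(c+t))" using wR[of "c+t"] cL t by simp
    also have "\<dots> = w!(qj + (p+b-qk+t))" by (simp only: i1)
    also have "\<dots> = e!(p+b-qk+t)" using qj(5) i3 by blast
    also have "\<dots> = w!(qk + (p+b-qk+t))" using qk(5) i3 by simp
    also have "\<dots> = w!(p+(b+t))" by (simp only: i2)
    also have "\<dots> = R!(b+t)" using wR[of "b+t"] bL t by simp
    finally show ?thesis .
  qed
  with uniq cL have "c = b" by blast
  moreover have "c \<noteq> b" unfolding c_def using aj qj qk by linarith
  ultimately show False by simp
qed


lemma size_ge_cat:
  assumes "finite V" "C \<subseteq> V" "\<forall>Y\<in>C. \<exists>Y1 Y2. \<rho> Y = Cat Y1 Y2"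
  shows "2 * card C \<le> slp_size V \<rho>"
proof -
  have "(\<Sum>X\<in>C. case \<rho> X of Term _ \<Rightarrow> 1 | Cat _ _ \<Rightarrow> (2::nat)) = (\<Sum>X\<in>C. 2)"
    using assms(3) by (intro sum.cong) auto
  also have "\<dots> = 2 * card C" by simp
  finally have e: "(\<Sum>X\<in>C. case \<rho> X of Term _ \<Rightarrow> 1 | Cat _ _ \<Rightarrow> (2::nat)) = 2 * card C" .
  have "(\<Sum>X\<in>C. case \<rho> X of Term _ \<Rightarrow> 1 | Cat _ _ \<Rightarrow> (2::nat))
      \<le> (\<Sum>X\<in>V. case \<rho> X of Term _ \<Rightarrow> 1 | Cat _ _ \<Rightarrow> (2::nat))"
    using assms(1,2) by (intro sum_mono2) auto
  then show ?thesis using e unfolding slp_size_def by simp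
qed

lemma size_ge_1:
  assumes "finite V" "S \<in> V"
  shows "1 \<le> slp_size V \<rho>"
proof -
  have "(case \<rho> S of Term _ \<Rightarrow> 1 | Cat _ _ \<Rightarrow> (2::nat)) \<le> (\<Sum>X\<in>V. case \<rho> X of Term _ \<Rightarrow> 1 | Cat _ _ \<Rightarrow> (2::nat))"
    using assms by (intro member_le_sum) auto
  moreover have "1 \<le> (case \<rho> S of Term _ \<Rightarrow> 1 | Cat _ _ \<Rightarrow> (2::nat))" by (cases "\<rho> S") auto
  ultimately show ?thesis unfolding slp_size_def by linarith
qed

theorem mainTheorem6:
  fixes c0 c1 cd :: 'a
    and V :: "'v set" and S :: 'v and \<rho> :: "'v \<Rightarrow> ('a, 'v) rhs"
    and n i :: nat and w :: "'a list"
  assumes "c0 \<noteq> c1" "c0 \<noteq> cd" "c1 \<noteq> cd"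
    and "n \<ge> 1"
    and "1 \<le> i" "i \<le> 2 * 2 ^ n"
    and "is_slp V S \<rho>"
    and "derives \<rho> S w"
    and "sublist (shiftbin_row c0 c1 cd n i) w"
  shows "slp_size V \<rho> \<ge> min i (2 * 2 ^ n - i + 1)"
proof -
  define R where "R = shiftbin_row c0 c1 cd n i"
  define N :: nat where "N = 2^n"
  define L :: nat where "L = n + 2"
  have lenR: "length R = N * L" unfolding R_def N_def L_def by (rule R_len)
  obtain x y where w: "w = x @ R @ y" using assms(9) unfolding R_def sublist_def by blast
  define p where "p = length x"
  have fin: "finite V" and SV: "S \<in> V" and clo: "\<forall>X\<in>V. \<forall>Y Z. \<rho> X = Cat Y Z \<longrightarrow> Y \<in> V \<and> Z \<in> V"
    using assms(7) unfolding is_slp_def by blast+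
  define B where "B = {max 1 (i - N) ..< min i N}"
  have Bact: "1 \<le> j \<and> j < N \<and> j < i \<and> i \<le> j + N" if "j \<in> B" for j
    using that unfolding B_def by auto
  define P where "P = (\<lambda>j Y. Y \<in> V \<and> (\<exists>Y1 Y2 u1 u2 q. \<rho> Y = Cat Y1 Y2 \<and>
     derives \<rho> Y1 u1 \<and> derives \<rho> Y2 u2 \<and> q \<le> p + j * L \<and> p + j * L < q + length u1 \<and>
     q + length u1 < p + j * L + L \<and>
     p + j * L + L \<le> q + length (u1 @ u2) \<and> q + length (u1 @ u2) \<le> length w \<and>
     (\<forall>t < length (u1 @ u2). w ! (q + t) = (u1 @ u2) ! t)))"
  have "\<exists>Y. P j Y" if jB: "j \<in> B" for j
  proof -
    have "Suc j * L \<le> N * L" using Bact[OF jB] by (intro mult_right_mono) auto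
    then have "p + j * L + L \<le> length w" using lenR unfolding w p_def by simp
    moreover have "2 \<le> L" unfolding L_def by simp
    ultimately show ?thesis
      using cover[OF assms(8) SV clo, of "p + j * L" L] unfolding P_def by blast
  qed
  then have ex: "\<forall>j\<in>B. \<exists>Y. P j Y" by blast
  obtain f where f: "\<forall>j\<in>B. P j (f j)" using bchoice[OF ex] by blast
  have key: False if jk: "j \<in> B" "k \<in> B" "f j = f k" "j < k" for j k
  proof -
    have Pj: "P j (f j)" and Pk: "P k (f k)" using f jk(1,2) by blast+
    from Pj[unfolded P_def] obtain Y1 Y2 u1 u2 qj where hj0: "f j \<in> V" and hj1: "\<rho> (f j) = Cat Y1 Y2 \<and>
     derives \<rho> Y1 u1 \<and> derives \<rho> Y2 u2 \<and> qj \<le> p + j * L \<and> p + j * L < qj + length u1 \<and>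
     qj + length u1 < p + j * L + L \<and>
     p + j * L + L \<le> qj + length (u1 @ u2) \<and> qj + length (u1 @ u2) \<le> length w \<and>
     (\<forall>t < length (u1 @ u2). w ! (qj + t) = (u1 @ u2) ! t)" by blast
    from Pk[unfolded P_def] obtain Y1' Y2' u1' u2' qk where hk0: "f k \<in> V" and hk1: "\<rho> (f k) = Cat Y1' Y2' \<and>
     derives \<rho> Y1' u1' \<and> derives \<rho> Y2' u2' \<and> qk \<le> p + k * L \<and> p + k * L < qk + length u1' \<and>
     qk + length u1' < p + k * L + L \<and>
     p + k * L + L \<le> qk + length (u1' @ u2') \<and> qk + length (u1' @ u2') \<le> length w \<and>
     (\<forall>t < length (u1' @ u2'). w ! (qk + t) = (u1' @ u2') ! t)" by blast
    have hj: "f j \<in> V" "\<rho> (f j) = Cat Y1 Y2"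
      "derives \<rho> Y1 u1" "derives \<rho> Y2 u2" "qj \<le> p + j * L" "p + j * L < qj + length u1"
      "qj + length u1 < p + j * L + L"
      "p + j * L + L \<le> qj + length (u1 @ u2)" "qj + length (u1 @ u2) \<le> length w"
      "\<forall>t < length (u1 @ u2). w ! (qj + t) = (u1 @ u2) ! t"
      using hj0 hj1 by blast+
    have hk: "f k \<in> V" "\<rho> (f k) = Cat Y1' Y2'"
      "derives \<rho> Y1' u1'" "derives \<rho> Y2' u2'" "qk \<le> p + k * L" "p + k * L < qk + length u1'"
      "qk + length u1' < p + k * L + L"
      "p + k * L + L \<le> qk + length (u1' @ u2')" "qk + length (u1' @ u2') \<le> length w"
      "\<forall>t < length (u1' @ u2'). w ! (qk + t) = (u1' @ u2') ! t"
      using hk0 hk1 by blast+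
    have e1: "Y1' = Y1" and e2: "Y2' = Y2" using hj(2) hk(2) jk(3) by simp_all
    have u1: "u1' = u1" using derives_fun[OF hk(3)[unfolded e1] hj(3)] .
    have u2: "u2' = u2" using derives_fun[OF hk(4)[unfolded e2] hj(4)] .
    have ka: "k < N" "k < i" "i \<le> k + N" using Bact[OF jk(2)] by auto
    have uniq: "\<forall>c. c + L \<le> length R \<longrightarrow> (\<forall>t<L. R!(c+t) = R!(k*L+t)) \<longrightarrow> c = k*L"
    proof (intro allI impI)
      fix c assume c1: "c + L \<le> length R" and c2: "\<forall>t<L. R!(c+t) = R!(k*L+t)"
      have k1: "k < 2^n" "k < i" "i \<le> k + 2^n" using ka unfolding N_def by auto
      have c1': "c + (n+2) \<le> 2^n*(n+2)" using c1 unfolding lenR N_def L_def .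
      have c2': "\<forall>t<n+2. shiftbin_row c0 c1 cd n i ! (c+t) = shiftbin_row c0 c1 cd n i ! (k*(n+2)+t)"
        using c2 unfolding R_def L_def .
      show "c = k*L" using R_uniq[OF assms(1-4) k1 c1' c2'] unfolding L_def .
    qed
    have "Suc k * L \<le> N * L" using ka by (intro mult_right_mono) auto
    then have bL: "k * L + L \<le> length R" using lenR by simp
    have "1 * L \<le> j * L" using Bact[OF jk(1)] by (intro mult_right_mono) auto
    then have a1: "p + L \<le> p + j * L" by simp
    have "Suc j * L \<le> k * L" using jk(4) by (intro mult_right_mono) auto
    then have a2: "p + j * L + L \<le> p + k * L" by simp
    show False
      using pair[OF w p_def uniq bL a1 a2 hj(5,6,7,8,10) hk(5,6,7,8,10)[unfolded u1 u2]]
      by (simp add: add.assoc)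
  qed
  have "inj_on f B"
  proof (rule inj_onI)
    fix j k assume "j \<in> B" "k \<in> B" "f j = f k"
    then show "j = k" using key[of j k] key[of k j] by (metis linorder_neqE_nat)
  qed
  moreover have "f ` B \<subseteq> {Y \<in> V. \<exists>Y1 Y2. \<rho> Y = Cat Y1 Y2}" using f unfolding P_def by blast
  moreover have "finite {Y \<in> V. \<exists>Y1 Y2. \<rho> Y = Cat Y1 Y2}" using fin by simp
  ultimately have "card B \<le> card {Y \<in> V. \<exists>Y1 Y2. \<rho> Y = Cat Y1 Y2}" by (rule card_inj_on_le)
  moreover have "2 * card {Y \<in> V. \<exists>Y1 Y2. \<rho> Y = Cat Y1 Y2} \<le> slp_size V \<rho>"
    using fin by (intro size_ge_cat) auto
  ultimately have s2: "2 * card B \<le> slp_size V \<rho>" by linarith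
  have s1: "1 \<le> slp_size V \<rho>" using size_ge_1[OF fin SV] .
  have cB: "card B = min i N - max 1 (i - N)" unfolding B_def by simp
  have "min i (2 * N - i + 1) \<le> max 1 (2 * card B)"
    unfolding cB using assms(5,6) unfolding N_def[symmetric] by (auto simp: min_def max_def)
  then show ?thesis using s1 s2 unfolding N_def by linarith
qed

end
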